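(* Let $S$ be a commutative ring. (1) Given $t,\delta\in S$, every $n\in V[1,t,\delta]$ has the form $n=-\det[X,Y]$ for some $X,Y\in\mathbb{M}_2(S)$ with $\operatorname{tr}(X)=t$ and $\det(X)=\delta$. (2) Let $X=\begin{pmatrix}a&b\\c&d\end{pmatrix}\in\mathbb{M}_2(S)$, $t=\operatorname{tr}(X)$, $\delta=\det(X)$, $\Delta=t^2-4\delta$. Then for every $Y\in\mathbb{M}_2(S)$: $-c^2\det[X,Y]\in V[1,t,\delta]$ and $-4c^2\det[X,Y]\in V[1,-\Delta]$. (3) With notation as in (2), if moreover $\operatorname{tr}(X)$ and $\operatorname{tr}(Y)$ both lie in $2S$, then $-c^2\det[X,Y]\in V[1,-\Delta]$.
   Context: $[X,Y]=XY-YX$. For $s,t,\delta\in S$, $V[s,t,\delta]=\{s r_1^2+t r_1r_2+\delta r_2^2 : r_1,r_2\in S\}$, and $V[s,\delta]:=V[s,0,\delta]$. *)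

theory Defs
  imports "HOL-Analysis.Analysis"
begin

definition commutator :: "'a::comm_ring_1^'n^'n \<Rightarrow> 'a^'n^'n \<Rightarrow> 'a^'n^'n" where
  "commutator X Y = X ** Y - Y ** X"

definition V3 :: "'a::comm_ring_1 \<Rightarrow> 'a \<Rightarrow> 'a \<Rightarrow> 'a set" where
  "V3 s t \<delta> = {s * r1^2 + t * r1 * r2 + \<delta> * r2^2 | r1 r2. True}"

definition V2 :: "'a::comm_ring_1 \<Rightarrow> 'a \<Rightarrow> 'a set" where
  "V2 s \<delta> = V3 s 0 \<delta>"

end

theory Submission
  imports Defs
begin

lemma trace2: "trace (A::'a::comm_ring_1^2^2) = A$1$1 + A$2$2"
  by (simp add: trace_def sum_2)

lemma comm_det:
  fixes X Y :: "'a::comm_ring_1^2^2"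
  shows "- det (commutator X Y) =
    (X$1$2 * Y$2$1 - X$2$1 * Y$1$2)^2 +
    (Y$1$2 * (X$1$1 - X$2$2) - X$1$2 * (Y$1$1 - Y$2$2)) *
    (X$2$1 * (Y$1$1 - Y$2$2) - Y$2$1 * (X$1$1 - X$2$2))"
  unfolding commutator_def det_2 by (simp add: matrix_matrix_mult_def sum_2 algebra_simps power2_eq_square)

lemma ring_id:
  fixes a b c d e f g h :: "'a::comm_ring_1"
  shows "c^2 * ((b * g - c * f)^2 + (f * (a - d) - b * (e - h)) * (c * (e - h) - g * (a - d))) =
     (c * (c * f - g * b) - d * (c * (e - h) - g * (a - d)))^2 + (a + d) * (c * (c * f - g * b) - d * (c * (e - h) - g * (a - d))) * (c * (e - h) - g * (a - d)) + (a * d - b * c) * (c * (e - h) - g * (a - d))^2"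
  by (simp add: algebra_simps power2_eq_square)

lemma key:
  fixes X Y :: "'a::comm_ring_1^2^2"
  defines "u \<equiv> X$2$1 * (Y$1$1 - Y$2$2) - Y$2$1 * (X$1$1 - X$2$2)"
  defines "w \<equiv> X$2$1 * Y$1$2 - Y$2$1 * X$1$2"
  shows "- ((X$2$1)^2) * det (commutator X Y) =
     (X$2$1 * w - X$2$2 * u)^2 + trace X * (X$2$1 * w - X$2$2 * u) * u + det X * u^2"
proof -
  have "- ((X$2$1)^2) * det (commutator X Y) = (X$2$1)^2 * (- det (commutator X Y))" by simp
  also have "\<dots> = (X$2$1 * w - X$2$2 * u)^2 + trace X * (X$2$1 * w - X$2$2 * u) * u + det X * u^2"
    unfolding comm_det trace2 det_2[of X] u_def w_def by (rule ring_id)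
  finally show ?thesis .
qed

lemma part1:
  fixes t \<delta> r1 r2 :: "'a::comm_ring_1"
  shows "\<exists>X Y :: 'a^2^2. trace X = t \<and> det X = \<delta> \<and> 1 * r1^2 + t * r1 * r2 + \<delta> * r2^2 = - det (commutator X Y)"
proof -
  define X :: "'a^2^2" where "X = (\<chi> i j. if i = 1 then (if j = 1 then 0 else - \<delta>) else (if j = 1 then 1 else t))"
  define Y :: "'a^2^2" where "Y = (\<chi> i j. if i = 1 then (if j = 1 then r2 else r1 + t * r2) else 0)"
  have "trace X = t" unfolding trace2 X_def by simp
  moreover have "det X = \<delta>" unfolding det_2 X_def by simp
  moreover have "- det (commutator X Y) = 1 * r1^2 + t * r1 * r2 + \<delta> * r2^2"
    unfolding comm_det X_def Y_def by (simp add: algebra_simps power2_eq_square)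
  ultimately show ?thesis by metis
qed

lemma part2a:
  fixes X Y :: "'a::comm_ring_1^2^2"
  shows "- ((X$2$1)^2) * det (commutator X Y) \<in> V3 1 (trace X) (det X)"
  unfolding V3_def key by auto

lemma part2b:
  fixes X Y :: "'a::comm_ring_1^2^2"
  shows "- (4 * (X$2$1)^2) * det (commutator X Y) \<in> V2 1 (- ((trace X)^2 - 4 * det X))"
proof -
  define u where "u = X$2$1 * (Y$1$1 - Y$2$2) - Y$2$1 * (X$1$1 - X$2$2)"
  define w where "w = X$2$1 * Y$1$2 - Y$2$1 * X$1$2"
  define r where "r = X$2$1 * w - X$2$2 * u"
  have "- (4 * (X$2$1)^2) * det (commutator X Y) = 4 * (- ((X$2$1)^2) * det (commutator X Y))" by simp
  also have "\<dots> = 4 * (r^2 + trace X * r * u + det X * u^2)"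
    unfolding key r_def u_def w_def ..
  also have "\<dots> = 1 * (2*r + trace X * u)^2 + 0 * (2*r + trace X * u) * u + (- ((trace X)^2 - 4 * det X)) * u^2"
    by (simp add: algebra_simps power2_eq_square)
  finally show ?thesis unfolding V2_def V3_def by blast
qed

lemma part3:
  fixes X Y :: "'a::comm_ring_1^2^2"
  assumes "trace X \<in> {2 * s | s. True}" "trace Y \<in> {2 * s | s. True}"
  shows "- ((X$2$1)^2) * det (commutator X Y) \<in> V2 1 (- ((trace X)^2 - 4 * det X))"
proof -
  obtain s where s: "trace X = 2 * s" using assms(1) by auto
  obtain v where v: "trace Y = 2 * v" using assms(2) by auto
  define u where "u = X$2$1 * (Y$1$1 - Y$2$2) - Y$2$1 * (X$1$1 - X$2$2)"
  define w where "w = X$2$1 * Y$1$2 - Y$2$1 * X$1$2"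
  define r where "r = X$2$1 * w - X$2$2 * u"
  define u' where "u' = X$2$1 * (v - Y$2$2) - Y$2$1 * (s - X$2$2)"
  have a: "X$1$1 = 2 * s - X$2$2" using s unfolding trace2 by (simp add: algebra_simps)
  have e: "Y$1$1 = 2 * v - Y$2$2" using v unfolding trace2 by (simp add: algebra_simps)
  have uu: "u = 2 * u'" unfolding u_def u'_def a e by (simp add: algebra_simps)
  have "- ((X$2$1)^2) * det (commutator X Y) = r^2 + trace X * r * u + det X * u^2"
    unfolding key r_def u_def w_def ..
  also have "\<dots> = 1 * (r + s * u)^2 + 0 * (r + s * u) * u' + (- ((trace X)^2 - 4 * det X)) * u'^2"
    unfolding s uu by (simp add: algebra_simps power2_eq_square)
  finally show ?thesis unfolding V2_def V3_def by blast
qed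

theorem theorem5p10:
  fixes dummy :: "'a::comm_ring_1"
  shows
   "(\<forall>(t::'a) \<delta> n. n \<in> V3 1 t \<delta> \<longrightarrow>
       (\<exists>X Y :: 'a^2^2. trace X = t \<and> det X = \<delta> \<and> n = - det (commutator X Y)))
    \<and> (\<forall>X Y :: 'a^2^2.
         - ((X$2$1)^2) * det (commutator X Y) \<in> V3 1 (trace X) (det X) \<and>
         - (4 * (X$2$1)^2) * det (commutator X Y) \<in> V2 1 (- ((trace X)^2 - 4 * det X)))
    \<and> (\<forall>X Y :: 'a^2^2.
         trace X \<in> {2 * s | s. True} \<and> trace Y \<in> {2 * s | s. True} \<longrightarrow>
         - ((X$2$1)^2) * det (commutator X Y) \<in> V2 1 (- ((trace X)^2 - 4 * det X)))"
proof (intro conjI allI impI)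
  fix t \<delta> n :: 'a
  assume "n \<in> V3 1 t \<delta>"
  then obtain r1 r2 where "n = 1 * r1^2 + t * r1 * r2 + \<delta> * r2^2" unfolding V3_def by blast
  then show "\<exists>X Y :: 'a^2^2. trace X = t \<and> det X = \<delta> \<and> n = - det (commutator X Y)"
    using part1[of t \<delta> r1 r2] by simp
next
  fix X Y :: "'a^2^2"
  show "- ((X$2$1)^2) * det (commutator X Y) \<in> V3 1 (trace X) (det X)" by (rule part2a)
  show "- (4 * (X$2$1)^2) * det (commutator X Y) \<in> V2 1 (- ((trace X)^2 - 4 * det X))" by (rule part2b)
next
  fix X Y :: "'a^2^2"
  assume "trace X \<in> {2 * s | s. True} \<and> trace Y \<in> {2 * s | s. True}"
  then show "- ((X$2$1)^2) * det (commutator X Y) \<in> V2 1 (- ((trace X)^2 - 4 * det X))"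
    using part3 by blast
qed

end
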